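(* Suppose that for every connected bipartite graph $H$ of even order and every weight function $w\colon V(H)\to\{0,1\}$, Alice wins the graph-grabbing game on $(H,w)$. Then for every connected graph $G$ of even order that has no induced subgraph isomorphic to a corona of an odd cycle and a point, and every weight function $w\colon V(G)\to\{0,1\}$, Alice wins the graph-grabbing game on $(G,w)$.
   Context: The graph-grabbing game is played by two players, Alice and Bob, on a connected graph $G$ with a weight function $w\colon V(G)\to\mathbb{R}_{\ge 0}$. Starting with Alice, the players alternately remove one vertex of the current graph, subject to the rule that the vertices remaining after each removal induce a connected subgraph of $G$ (the empty set counts as allowed at the end). When all vertices have been removed, each player's score is the total weight of the vertices that player removed; both players aim to maximise their own score. Alice is said to win on $(G,w)$ if she has a strategy guaranteeing her a score of at least half of $\sum_{v\in V(G)} w(v)$. The corona of an odd cycle and a point is the graph obtained from a cycle $x_1x_2\cdots x_r$ with $r\ge 3$ odd by adding $r$ new vertices $y_1,\dots,y_r$, with $y_i$ adjacent only to $x_i$ (i.e. each cycle vertex receives one pendant leaf). *)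

theory Defs
  imports Complex_Main
begin

definition simple_graph :: "'a set \<Rightarrow> ('a \<Rightarrow> 'a \<Rightarrow> bool) \<Rightarrow> bool" where
  "simple_graph V E \<longleftrightarrow> finite V \<and> (\<forall>x y. E x y \<longrightarrow> x \<in> V \<and> y \<in> V)
     \<and> (\<forall>x y. E x y \<longrightarrow> E y x) \<and> (\<forall>x. \<not> E x x)"

definition connected_on :: "('a \<Rightarrow> 'a \<Rightarrow> bool) \<Rightarrow> 'a set \<Rightarrow> bool" where
  "connected_on E S \<longleftrightarrow> S \<noteq> {} \<and>
     (\<forall>x\<in>S. \<forall>y\<in>S. (\<lambda>a b. a \<in> S \<and> b \<in> S \<and> E a b)\<^sup>*\<^sup>* x y)"

definition bipartite :: "'a set \<Rightarrow> ('a \<Rightarrow> 'a \<Rightarrow> bool) \<Rightarrow> bool" where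
  "bipartite V E \<longleftrightarrow> (\<exists>A. \<forall>x y. E x y \<longrightarrow> (x \<in> A \<longleftrightarrow> y \<notin> A))"

definition legal_move :: "('a \<Rightarrow> 'a \<Rightarrow> bool) \<Rightarrow> 'a set \<Rightarrow> 'a \<Rightarrow> bool" where
  "legal_move E S v \<longleftrightarrow> v \<in> S \<and> (S - {v} = {} \<or> connected_on E (S - {v}))"

text \<open>guarantees E w S k: the player about to move, with S the set of remaining
  vertices, has a strategy ensuring that the total weight of the vertices he removes
  from now on is at least k (whatever the opponent does).\<close>
inductive guarantees :: "('a \<Rightarrow> 'a \<Rightarrow> bool) \<Rightarrow> ('a \<Rightarrow> real) \<Rightarrow> 'a set \<Rightarrow> real \<Rightarrow> bool"
  for E w where
  empty: "k \<le> 0 \<Longrightarrow> guarantees E w {} k"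
| move: "\<lbrakk> legal_move E S v;
           S - {v} = {} \<Longrightarrow> k \<le> w v;
           \<And>u. \<lbrakk> S - {v} \<noteq> {}; legal_move E (S - {v}) u \<rbrakk>
                 \<Longrightarrow> guarantees E w (S - {v} - {u}) (k - w v) \<rbrakk>
         \<Longrightarrow> guarantees E w S k"

definition alice_wins :: "'a set \<Rightarrow> ('a \<Rightarrow> 'a \<Rightarrow> bool) \<Rightarrow> ('a \<Rightarrow> real) \<Rightarrow> bool" where
  "alice_wins V E w \<longleftrightarrow> guarantees E w V ((\<Sum>v\<in>V. w v) / 2)"

definition has_induced_odd_cycle_corona :: "'a set \<Rightarrow> ('a \<Rightarrow> 'a \<Rightarrow> bool) \<Rightarrow> bool" where
  "has_induced_odd_cycle_corona V E \<longleftrightarrow>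
    (\<exists>r::nat. \<exists>x y :: nat \<Rightarrow> 'a. odd r \<and> 3 \<le> r \<and>
       inj_on x {..<r} \<and> inj_on y {..<r} \<and> x ` {..<r} \<inter> y ` {..<r} = {} \<and>
       x ` {..<r} \<subseteq> V \<and> y ` {..<r} \<subseteq> V \<and>
       (\<forall>i<r. \<forall>j<r. E (x i) (x j) \<longleftrightarrow> (j = (i + 1) mod r \<or> i = (j + 1) mod r)) \<and>
       (\<forall>i<r. \<forall>j<r. E (x i) (y j) \<longleftrightarrow> i = j) \<and>
       (\<forall>i<r. \<forall>j<r. E (y i) (x j) \<longleftrightarrow> i = j) \<and>
       (\<forall>i<r. \<forall>j<r. \<not> E (y i) (y j)))"

end

theory Submission
  imports Defs
begin


abbreviation ed :: "('a \<Rightarrow> 'a \<Rightarrow> bool) \<Rightarrow> 'a set \<Rightarrow> 'a \<Rightarrow> 'a \<Rightarrow> bool" where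
  "ed E S \<equiv> (\<lambda>a b. a \<in> S \<and> b \<in> S \<and> E a b)"

lemma sym_rt:
  assumes sym: "\<And>x y. E x y \<Longrightarrow> E y x" and "(ed E S)\<^sup>*\<^sup>* a b"
  shows "(ed E S)\<^sup>*\<^sup>* b a"
  using assms(2)
proof (induction rule: rtranclp_induct)
  case base then show ?case by simp
next
  case (step y z)
  then show ?case using sym by (metis (no_types, lifting) converse_rtranclp_into_rtranclp)
qed

lemma guar_mono:
  assumes "guarantees E w S k" "k' \<le> k"
  shows "guarantees E w S k'"
  using assms
proof (induction arbitrary: k' rule: guarantees.induct)
  case (empty k)
  then show ?case by (intro guarantees.empty) simp
next
  case (move S v k)
  show ?case
  proof (rule guarantees.move[OF move(1)])
    show "S - {v} = {} \<Longrightarrow> k' \<le> w v" using move by force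
    fix u assume "S - {v} \<noteq> {}" "legal_move E (S - {v}) u"
    then show "guarantees E w (S - {v} - {u}) (k' - w v)" using move by force
  qed
qed

lemma insert_conn:
  assumes sym: "\<And>x y. E x y \<Longrightarrow> E y x" and c: "connected_on E T" and z: "z \<in> T" and e: "E v z"
  shows "connected_on E (insert v T)"
proof -
  have mono: "(ed E (insert v T))\<^sup>*\<^sup>* a b" if "(ed E T)\<^sup>*\<^sup>* a b" for a b
    using that by (rule mono_rtranclp[rule_format, rotated]) auto
  have vz: "(ed E (insert v T))\<^sup>*\<^sup>* v z" using e z by (intro r_into_rtranclp) auto
  have zv: "(ed E (insert v T))\<^sup>*\<^sup>* z v" using e z sym by (intro r_into_rtranclp) auto
  show ?thesis unfolding connected_on_def
  proof (intro conjI ballI)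
    show "insert v T \<noteq> {}" by simp
    fix x y assume x: "x \<in> insert v T" and y: "y \<in> insert v T"
    have xz: "(ed E (insert v T))\<^sup>*\<^sup>* x z"
      using x vz mono c z unfolding connected_on_def by auto
    have zy: "(ed E (insert v T))\<^sup>*\<^sup>* z y"
      using y zv mono c z unfolding connected_on_def by auto
    show "(ed E (insert v T))\<^sup>*\<^sup>* x y" using xz zy by (rule rtranclp_trans)
  qed
qed



definition wlk :: "('a \<Rightarrow> 'a \<Rightarrow> bool) \<Rightarrow> 'a set \<Rightarrow> nat \<Rightarrow> (nat \<Rightarrow> 'a) \<Rightarrow> 'a \<Rightarrow> 'a \<Rightarrow> bool" where
  "wlk E S n f a b \<longleftrightarrow> f 0 = a \<and> f n = b \<and> (\<forall>i<n. f i \<in> S \<and> f (Suc i) \<in> S \<and> E (f i) (f (Suc i)))"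

lemma wlk_app:
  assumes "wlk E S m f a b" "wlk E S n g b c"
  shows "wlk E S (m + n) (\<lambda>i. if i \<le> m then f i else g (i - m)) a c"
proof -
  define h where "h = (\<lambda>i. if i \<le> m then f i else g (i - m))"
  have "h 0 = a" "h (m+n) = c" using assms unfolding wlk_def h_def by auto
  moreover have "ed E S (h i) (h (Suc i))" if i: "i < m + n" for i
  proof (cases "i < m")
    case True then show ?thesis using assms unfolding wlk_def h_def by auto
  next
    case False
    then have "Suc i - m = Suc (i - m)" "i - m < n" using i by auto
    moreover have "i = m \<Longrightarrow> f m = g 0" using assms unfolding wlk_def by auto
    ultimately show ?thesis using assms False unfolding wlk_def h_def
      by (cases "i = m") auto
  qed
  ultimately show ?thesis unfolding wlk_def h_def by blast
qed

lemma wlk_rev: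
  assumes sym: "\<And>x y. E x y \<Longrightarrow> E y x" and "wlk E S n f a b"
  shows "wlk E S n (\<lambda>i. f (n - i)) b a"
proof -
  have "ed E S (f (n - i)) (f (n - Suc i))" if i: "i < n" for i
  proof -
    define j where "j = n - Suc i"
    have j: "j < n" "n - i = Suc j" "n - Suc i = j" using i unfolding j_def by auto
    show ?thesis using assms(2) j sym unfolding wlk_def by auto
  qed
  then show ?thesis using assms(2) unfolding wlk_def by auto
qed

lemma wlk_sub:
  assumes "wlk E S n f a b" "i \<le> j" "j \<le> n"
  shows "wlk E S (j - i) (\<lambda>t. f (i + t)) (f i) (f j)"
  using assms unfolding wlk_def by auto

lemma wlk_edge:
  assumes "E a b" "a \<in> S" "b \<in> S"
  shows "wlk E S 1 (\<lambda>i. if i = 0 then a else b) a b"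
  using assms unfolding wlk_def by auto

lemma wlk_refl: "wlk E S 0 (\<lambda>i. a) a a"
  unfolding wlk_def by auto

lemma rt_wlk:
  assumes "(ed E S)\<^sup>*\<^sup>* a b"
  shows "\<exists>n f. wlk E S n f a b"
  using assms
proof (induction rule: rtranclp_induct)
  case base then show ?case using wlk_refl by fast
next
  case (step y z)
  then obtain n f where "wlk E S n f a y" by blast
  moreover have "wlk E S 1 (\<lambda>i. if i = 0 then y else z) y z" using step by (intro wlk_edge) auto
  ultimately show ?case by (blast intro: wlk_app)
qed



lemma odd_or_bip:
  assumes sym: "\<And>x y. E x y \<Longrightarrow> E y x" and c: "connected_on E S"
  shows "(\<exists>n f a. odd n \<and> wlk E S n f a a) \<or> (\<exists>A. \<forall>x\<in>S. \<forall>y\<in>S. E x y \<longrightarrow> (x \<in> A \<longleftrightarrow> y \<notin> A))"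
proof (cases "\<exists>n f a. odd n \<and> wlk E S n f a a")
  case True then show ?thesis by blast
next
  case False
  note no = False
  obtain r where r: "r \<in> S" using c unfolding connected_on_def by auto
  have ex: "\<exists>n f. wlk E S n f r x" if "x \<in> S" for x
    using c r that unfolding connected_on_def by (blast intro: rt_wlk)
  have par: "even m \<longleftrightarrow> odd n" if "wlk E S m f r x" "wlk E S n g r y" "E x y" "x \<in> S" "y \<in> S"
    for m n f g x y
  proof -
    note w1 = wlk_app[OF that(1) wlk_edge[of E x y S, OF that(3-5)]]
    note w2 = wlk_app[OF w1 wlk_rev[OF sym that(2)]]
    have "even (m + 1 + n)" using no w2 by blast
    then show ?thesis by auto
  qed
  define A where "A = {x. \<exists>n f. even n \<and> wlk E S n f r x}"
  have "\<exists>A. \<forall>x\<in>S. \<forall>y\<in>S. E x y \<longrightarrow> (x \<in> A \<longleftrightarrow> y \<notin> A)"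
  proof (rule exI[of _ A], intro ballI impI)
    fix x y assume x: "x \<in> S" and y: "y \<in> S" and e: "E x y"
    obtain m f where mf: "wlk E S m f r x" using ex x by blast
    obtain n g where ng: "wlk E S n g r y" using ex y by blast
    have p: "even m \<longleftrightarrow> odd n" using par[OF mf ng e x y] .
    show "x \<in> A \<longleftrightarrow> y \<notin> A"
    proof
      assume "x \<in> A"
      then obtain m' f' where "even m'" "wlk E S m' f' r x" unfolding A_def by blast
      show "y \<notin> A"
      proof
        assume "y \<in> A"
        then obtain n' g' where "even n'" "wlk E S n' g' r y" unfolding A_def by blast
        with par[OF \<open>wlk E S m' f' r x\<close> this(2) e x y] \<open>even m'\<close> show False by simp
      qed
    next
      assume "y \<notin> A"
      then have "odd n" using ng unfolding A_def by blast
      then have "even m" using p by simp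
      then show "x \<in> A" using mf unfolding A_def by blast
    qed
  qed
  then show ?thesis by blast
qed



lemma min_odd:
  assumes sym: "\<And>x y. E x y \<Longrightarrow> E y x" and irr: "\<And>x. \<not> E x x"
    and w: "wlk E S n f a a" and on: "odd n"
  shows "\<exists>(r::nat) X. odd r \<and> 3 \<le> r \<and> inj_on X {..<r} \<and> X ` {..<r} \<subseteq> S \<and>
     (\<forall>i<r. \<forall>j<r. E (X i) (X j) \<longleftrightarrow> (j = (i + 1) mod r \<or> i = (j + 1) mod r))"
proof -
  define P where "P m \<longleftrightarrow> odd m \<and> (\<exists>f a. wlk E S m f a a)" for m
  have Pn: "P n" using w on unfolding P_def by blast
  define r where "r = (LEAST m. P m)"
  have Pr: "P r" unfolding r_def using Pn by (rule LeastI)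
  have minr: "r \<le> m" if "P m" for m unfolding r_def using that by (rule Least_le)
  from Pr obtain X b where X: "wlk E S r X b b" and ro: "odd r" unfolding P_def by blast
  have X0: "X 0 = b" "X r = b" and Xs: "\<And>i. i < r \<Longrightarrow> ed E S (X i) (X (Suc i))"
    using X unfolding wlk_def by auto
  have XS: "X i \<in> S" if "i \<le> r" for i
  proof (cases "i < r")
    case True then show ?thesis using Xs by blast
  next
    case False
    then have "i = r" using that by simp
    moreover have "r > 0" using ro by (cases r) auto
    ultimately show ?thesis using Xs[of 0] X0 by auto
  qed
  have r1: "r \<noteq> 1"
  proof
    assume "r = 1"
    then have "E (X 0) (X 1)" using Xs[of 0] by auto
    then show False using X0 irr \<open>r = 1\<close> by auto
  qed
  have r3: "3 \<le> r" using ro r1 by presburger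
  have inj: "i = j" if ij: "i < j" "j < r" "X i = X j" for i j
  proof -
    have w1: "wlk E S (j - i) (\<lambda>t. X (i + t)) (X i) (X i)"
      using wlk_sub[OF X, of i j] ij by auto
    have a1: "wlk E S (i - 0) (\<lambda>t. X (0 + t)) (X 0) (X j)"
      using wlk_sub[OF X, of 0 i] ij by auto
    have a2: "wlk E S (r - j) (\<lambda>t. X (j + t)) (X j) (X 0)"
      using wlk_sub[OF X, of j r] ij X0 by auto
    note w2 = wlk_app[OF a1 a2]
    have "odd (j - i) \<or> odd (i - 0 + (r - j))" using ro ij by presburger
    then show ?thesis
    proof
      assume "odd (j - i)"
      then have "P (j - i)" using w1 unfolding P_def by blast
      then show ?thesis using minr ij by force
    next
      assume "odd (i - 0 + (r - j))"
      then have "P (i - 0 + (r - j))" using w2 unfolding P_def by blast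
      then show ?thesis using minr ij by force
    qed
  qed
  have chord: "j = i + 1 \<or> (i = 0 \<and> j = r - 1)" if ij: "i < j" "j < r" "E (X i) (X j)" for i j
  proof (rule ccontr)
    assume nc: "\<not> (j = i + 1 \<or> (i = 0 \<and> j = r - 1))"
    have Xi: "X i \<in> S" and Xj: "X j \<in> S" using XS ij by auto
    have s1: "wlk E S (j - i) (\<lambda>t. X (i + t)) (X i) (X j)"
      using wlk_sub[OF X, of i j] ij by auto
    note w1 = wlk_app[OF s1 wlk_edge[of E "X j" "X i" S, OF sym[OF ij(3)] Xj Xi]]
    have a1: "wlk E S (i - 0) (\<lambda>t. X (0 + t)) (X 0) (X i)"
      using wlk_sub[OF X, of 0 i] ij by auto
    have a2: "wlk E S (r - j) (\<lambda>t. X (j + t)) (X j) (X 0)"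
      using wlk_sub[OF X, of j r] ij X0 by auto
    note w2 = wlk_app[OF wlk_app[OF a1 wlk_edge[of E "X i" "X j" S, OF ij(3) Xi Xj]] a2]
    have "odd (j - i + 1) \<or> odd (i - 0 + 1 + (r - j))" using ro ij by presburger
    then show False
    proof
      assume "odd (j - i + 1)"
      then have "P (j - i + 1)" using w1 unfolding P_def by blast
      then show False using minr ij nc by force
    next
      assume "odd (i - 0 + 1 + (r - j))"
      then have "P (i - 0 + 1 + (r - j))" using w2 unfolding P_def by blast
      then show False using minr ij nc by force
    qed
  qed
  have injX: "inj_on X {..<r}"
    unfolding inj_on_def
  proof (intro ballI impI)
    fix i j assume "i \<in> {..<r}" "j \<in> {..<r}" "X i = X j"
    then show "i = j" using inj[of i j] inj[of j i] by (cases i j rule: linorder_cases) auto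
  qed
  have edge: "E (X i) (X j) \<longleftrightarrow> (j = (i + 1) mod r \<or> i = (j + 1) mod r)" if "i < r" "j < r" for i j
  proof
    assume e: "E (X i) (X j)"
    have "i \<noteq> j" using e irr by auto
    then show "j = (i + 1) mod r \<or> i = (j + 1) mod r"
    proof (cases i j rule: linorder_cases)
      case less
      then show ?thesis using chord[OF less \<open>j < r\<close> e] that r3 by auto
    next
      case greater
      then show ?thesis using chord[OF greater \<open>i < r\<close> sym[OF e]] that r3 by auto
    qed simp
  next
    have step: "E (X k) (X ((k + 1) mod r))" if "k < r" for k
    proof (cases "k + 1 < r")
      case True then show ?thesis using Xs[OF that] by simp
    next
      case False
      then have "k + 1 = r" using that by simp
      then show ?thesis using Xs[OF that] X0 by simp
    qed
    assume "j = (i + 1) mod r \<or> i = (j + 1) mod r"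
    then show "E (X i) (X j)" using step[OF \<open>i < r\<close>] step[OF \<open>j < r\<close>] sym by auto
  qed
  show ?thesis
    using ro r3 injX XS edge by (intro exI[of _ r] exI[of _ X]) auto
qed



lemma exists_legal:
  assumes fin: "finite S" and c: "connected_on E S" and sym: "\<And>x y. E x y \<Longrightarrow> E y x"
  shows "\<exists>v. legal_move E S v"
proof -
  obtain r where r: "r \<in> S" using c unfolding connected_on_def by auto
  define d where "d u = (LEAST n. ((ed E S) ^^ n) r u)" for u
  have dp: "((ed E S) ^^ (d u)) r u" if "u \<in> S" for u
  proof -
    have "\<exists>n. ((ed E S) ^^ n) r u" using c r that unfolding connected_on_def rtranclp_power by blast
    then show ?thesis unfolding d_def by (rule LeastI_ex)
  qed
  have dl: "d u \<le> n" if "((ed E S) ^^ n) r u" for u n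
    unfolding d_def using that by (rule Least_le)
  define M where "M = Max (d ` S)"
  have "M \<in> d ` S" unfolding M_def using fin r by (intro Max_in) auto
  then obtain v where v: "v \<in> S" "d v = M" by auto
  have dle: "d u \<le> d v" if "u \<in> S" for u using v fin that unfolding M_def by auto
  have reach: "\<forall>u\<in>S. d u \<le> n \<longrightarrow> u \<noteq> v \<longrightarrow> (ed E (S - {v}))\<^sup>*\<^sup>* r u" for n
  proof (induction n)
    case 0
    show ?case
    proof (intro ballI impI)
      fix u assume "u \<in> S" "d u \<le> 0" "u \<noteq> v"
      then have "((ed E S) ^^ 0) r u" using dp[of u] by simp
      then show "(ed E (S - {v}))\<^sup>*\<^sup>* r u" by simp
    qed
  next
    case (Suc n)
    show ?case
    proof (intro ballI impI)
      fix u assume u: "u \<in> S" "d u \<le> Suc n" "u \<noteq> v"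
      show "(ed E (S - {v}))\<^sup>*\<^sup>* r u"
      proof (cases "d u \<le> n")
        case True then show ?thesis using Suc u by blast
      next
        case False
        then have du: "d u = Suc n" using u by simp
        then have "((ed E S) ^^ Suc n) r u" using dp[OF u(1)] by simp
        then obtain u' where u': "((ed E S) ^^ n) r u'" "ed E S u' u" by (rule relpowp_Suc_E)
        have "d u' \<le> n" using dl[OF u'(1)] .
        moreover have "d u \<le> d v" using dle u by simp
        ultimately have "u' \<noteq> v" using du by auto
        then have "(ed E (S - {v}))\<^sup>*\<^sup>* r u'" using Suc u' \<open>d u' \<le> n\<close> by blast
        moreover have "ed E (S - {v}) u' u" using u' \<open>u' \<noteq> v\<close> u by auto
        ultimately show ?thesis by (rule rtranclp.rtrancl_into_rtrancl)
      qed
    qed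
  qed
  have "S - {v} = {} \<or> connected_on E (S - {v})"
  proof (cases "S - {v} = {}")
    case False
    have "connected_on E (S - {v})" unfolding connected_on_def
    proof (intro conjI ballI)
      show "S - {v} \<noteq> {}" by fact
      fix x y assume x: "x \<in> S - {v}" and y: "y \<in> S - {v}"
      have rx: "(ed E (S - {v}))\<^sup>*\<^sup>* r x" using reach[of "d x"] x by blast
      have "(ed E (S - {v}))\<^sup>*\<^sup>* x r" using sym_rt[of E "S - {v}" r x, OF sym rx] .
      moreover have "(ed E (S - {v}))\<^sup>*\<^sup>* r y" using reach[of "d y"] y by blast
      ultimately show "(ed E (S - {v}))\<^sup>*\<^sup>* x y" by (rule rtranclp_trans)
    qed
    then show ?thesis by simp
  qed simp
  then show ?thesis using v unfolding legal_move_def by blast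
qed

lemma cut_neighbor:
  assumes c: "connected_on E S" and sym: "\<And>x y. E x y \<Longrightarrow> E y x"
    and x: "x \<in> S" and c0: "c0 \<in> S - {x}" and nc: "\<not> connected_on E (S - {x})"
  shows "\<exists>y. y \<in> S - {x} \<and> E x y \<and> \<not> (ed E (S - {x}))\<^sup>*\<^sup>* c0 y"
proof -
  let ?R = "ed E (S - {x})"
  obtain a b where ab: "a \<in> S - {x}" "b \<in> S - {x}" "\<not> ?R\<^sup>*\<^sup>* a b"
    using nc c0 unfolding connected_on_def by blast
  have "\<exists>a'\<in>S - {x}. \<not> ?R\<^sup>*\<^sup>* c0 a'"
  proof (rule ccontr)
    assume "\<not> ?thesis"
    then have "?R\<^sup>*\<^sup>* c0 a" "?R\<^sup>*\<^sup>* c0 b" using ab by auto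
    then have "?R\<^sup>*\<^sup>* a b" using sym_rt[of E "S - {x}" c0 a, OF sym] by (meson rtranclp_trans)
    then show False using ab by blast
  qed
  then obtain a' where a': "a' \<in> S - {x}" "\<not> ?R\<^sup>*\<^sup>* c0 a'" by blast
  have xa: "(ed E S)\<^sup>*\<^sup>* x a'" using c x a' unfolding connected_on_def by blast
  have gen: "(z \<noteq> x \<and> ?R\<^sup>*\<^sup>* z a') \<or> (\<exists>y. y \<in> S - {x} \<and> E x y \<and> ?R\<^sup>*\<^sup>* y a')"
    if "(ed E S)\<^sup>*\<^sup>* z a'" for z
    using that
  proof (induction rule: converse_rtranclp_induct)
    case base then show ?case using a' by auto
  next
    case (step z z')
    show ?case
    proof (cases "z' \<noteq> x \<and> ?R\<^sup>*\<^sup>* z' a'")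
      case T: True
      show ?thesis
      proof (cases "z = x")
        case True
        then show ?thesis using step T by auto
      next
        case F: False
        then have zz: "?R z z'" using step T by auto
        have "?R\<^sup>*\<^sup>* z a'" using converse_rtranclp_into_rtranclp[of ?R z z' a', OF zz] T by blast
        then show ?thesis using F by blast
      qed
    next
      case False then show ?thesis using step by auto
    qed
  qed
  from gen[OF xa] obtain y where y: "y \<in> S - {x}" "E x y" "?R\<^sup>*\<^sup>* y a'" by auto
  have "\<not> ?R\<^sup>*\<^sup>* c0 y" using y a' by (meson rtranclp_trans)
  then show ?thesis using y by blast
qed



lemma rt_map:
  assumes "\<And>a b. R a b \<Longrightarrow> R' (h a) (h b)" and "R\<^sup>*\<^sup>* x y"
  shows "R'\<^sup>*\<^sup>* (h x) (h y)"
  using assms(2)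
proof (induction rule: rtranclp_induct)
  case base then show ?case by simp
next
  case (step y z) then show ?case using assms(1) by (meson rtranclp.rtrancl_into_rtrancl)
qed

lemma conn_iso:
  assumes inj: "inj_on h VH" and T: "T \<subseteq> VH"
    and ed: "\<And>a b. a \<in> VH \<Longrightarrow> b \<in> VH \<Longrightarrow> EH a b \<longleftrightarrow> E (h a) (h b)"
  shows "connected_on E (h ` T) \<longleftrightarrow> connected_on EH T"
proof
  assume c: "connected_on E (h ` T)"
  define g where "g = inv_into VH h"
  have gh: "g (h x) = x" if "x \<in> VH" for x unfolding g_def using inj that by simp
  have hg: "h (g a) = a" "g a \<in> T" if "a \<in> h ` T" for a
    using that T gh by auto
  show "connected_on EH T" unfolding connected_on_def
  proof (intro conjI ballI)
    show "T \<noteq> {}" using c unfolding connected_on_def by auto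
    fix x y assume x: "x \<in> T" and y: "y \<in> T"
    have r: "(ed E (h ` T))\<^sup>*\<^sup>* (h x) (h y)" using c x y unfolding connected_on_def by auto
    have "(ed EH T)\<^sup>*\<^sup>* (g (h x)) (g (h y))"
    proof (rule rt_map[OF _ r])
      fix a b assume ab: "ed E (h ` T) a b"
      then show "ed EH T (g a) (g b)" using hg[of a] hg[of b] ed[of "g a" "g b"] T by auto
    qed
    moreover have "g (h x) = x" "g (h y) = y" using gh x y T by auto
    ultimately show "(ed EH T)\<^sup>*\<^sup>* x y" by simp
  qed
next
  assume c: "connected_on EH T"
  show "connected_on E (h ` T)" unfolding connected_on_def
  proof (intro conjI ballI)
    show "h ` T \<noteq> {}" using c unfolding connected_on_def by auto
    fix x' y' assume "x' \<in> h ` T" "y' \<in> h ` T"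
    then obtain x y where xy: "x \<in> T" "y \<in> T" "x' = h x" "y' = h y" by auto
    have r: "(ed EH T)\<^sup>*\<^sup>* x y" using c xy unfolding connected_on_def by auto
    show "(ed E (h ` T))\<^sup>*\<^sup>* x' y'" unfolding xy
    proof (rule rt_map[OF _ r])
      fix a b assume "ed EH T a b"
      then show "ed E (h ` T) (h a) (h b)" using ed T by auto
    qed
  qed
qed

lemma img_diff: "inj_on h VH \<Longrightarrow> S \<subseteq> VH \<Longrightarrow> v \<in> VH \<Longrightarrow> h ` S - {h v} = h ` (S - {v})"
  unfolding inj_on_def by auto

lemma legal_iso:
  assumes inj: "inj_on h VH" and S: "S \<subseteq> VH"
    and ed: "\<And>a b. a \<in> VH \<Longrightarrow> b \<in> VH \<Longrightarrow> EH a b \<longleftrightarrow> E (h a) (h b)"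
    and l: "legal_move EH S v"
  shows "legal_move E (h ` S) (h v)"
proof -
  have v: "v \<in> S" using l unfolding legal_move_def by auto
  have eq: "h ` S - {h v} = h ` (S - {v})" using img_diff[OF inj S] v S by auto
  show ?thesis using l v S conn_iso[of h VH _ EH E, OF inj _ ed, of "S - {v}"] unfolding legal_move_def eq by auto
qed

lemma guar_iso:
  assumes inj: "inj_on h VH"
    and ed: "\<And>a b. a \<in> VH \<Longrightarrow> b \<in> VH \<Longrightarrow> EH a b \<longleftrightarrow> E (h a) (h b)"
    and wt: "\<And>a. a \<in> VH \<Longrightarrow> wH a = w (h a)"
    and g: "guarantees EH wH T k"
  shows "T \<subseteq> VH \<Longrightarrow> guarantees E w (h ` T) k"
  using g
proof (induction rule: guarantees.induct)
  case (empty k)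
  then show ?case by (simp add: guarantees.empty)
next
  case (move S v k)
  have v: "v \<in> S" using move(1) unfolding legal_move_def by auto
  have eq: "h ` S - {h v} = h ` (S - {v})" using img_diff[OF inj move(5)] v move(5) by auto
  show ?case
  proof (rule guarantees.move[OF legal_iso[OF inj move(5) ed move(1)]])
    show "h ` S - {h v} = {} \<Longrightarrow> k \<le> w (h v)" using move(2) eq wt v move(5) by auto
    fix u' assume ne: "h ` S - {h v} \<noteq> {}" and lu: "legal_move E (h ` S - {h v}) u'"
    then obtain u where u: "u \<in> S - {v}" "u' = h u" unfolding eq legal_move_def by auto
    have eq2: "h ` (S - {v}) - {h u} = h ` (S - {v} - {u})"
      using img_diff[OF inj, of "S - {v}" u] u move(5) by auto
    have lu2: "legal_move E (h ` (S - {v})) (h u)" using lu eq u by simp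
    then have "h ` (S - {v} - {u}) = {} \<or> connected_on E (h ` (S - {v} - {u}))"
      using eq2 unfolding legal_move_def by auto
    then have "S - {v} - {u} = {} \<or> connected_on EH (S - {v} - {u})"
      using conn_iso[of h VH "S - {v} - {u}" EH E, OF inj _ ed] move(5) by auto
    then have luH: "legal_move EH (S - {v}) u" using u unfolding legal_move_def by auto
    have "guarantees E w (h ` (S - {v} - {u})) (k - wH v)"
      using move(4)[OF _ luH] ne eq move(5) by auto
    then show "guarantees E w (h ` S - {h v} - {u'}) (k - w (h v))"
      using eq eq2 u wt v move(5) by auto
  qed
qed



lemma bip_case:
  fixes S :: "'a set" and E :: "'a \<Rightarrow> 'a \<Rightarrow> bool" and w :: "'a \<Rightarrow> real"
  assumes bip: "\<And>(VH :: nat set) EH (wH :: nat \<Rightarrow> real).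
      \<lbrakk> simple_graph VH EH; connected_on EH VH; bipartite VH EH; even (card VH);
        \<forall>v\<in>VH. wH v \<in> {0, 1} \<rbrakk> \<Longrightarrow> alice_wins VH EH wH"
    and sym: "\<And>x y. E x y \<Longrightarrow> E y x" and irr: "\<And>x. \<not> E x x"
    and fin: "finite S" and c: "connected_on E S" and ev: "even (card S)"
    and A: "\<forall>x\<in>S. \<forall>y\<in>S. E x y \<longrightarrow> (x \<in> A \<longleftrightarrow> y \<notin> A)"
    and wt: "\<forall>v\<in>S. w v \<in> {0, 1}"
  shows "guarantees E w S (sum w S / 2)"
proof -
  obtain h where bh: "bij_betw h {0..<card S} S" using ex_bij_betw_nat_finite[OF fin] by blast
  define VH where "VH = {0..<card S}"
  define EH where "EH a b \<longleftrightarrow> a \<in> VH \<and> b \<in> VH \<and> E (h a) (h b)" for a b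
  define wH where "wH a = w (h a)" for a
  have inj: "inj_on h VH" using bh unfolding VH_def by (rule bij_betw_imp_inj_on)
  have img: "h ` VH = S" using bh unfolding VH_def by (rule bij_betw_imp_surj_on)
  have edH: "EH a b \<longleftrightarrow> E (h a) (h b)" if "a \<in> VH" "b \<in> VH" for a b
    using that unfolding EH_def by auto
  have sg: "simple_graph VH EH" unfolding simple_graph_def EH_def VH_def using sym irr by auto
  have cH: "connected_on EH VH" using conn_iso[of h VH VH EH E, OF inj _ edH] c img by auto
  have bH: "bipartite VH EH" unfolding bipartite_def
  proof (rule exI[of _ "{a. h a \<in> A}"], intro allI impI)
    fix x y assume "EH x y"
    then show "(x \<in> {a. h a \<in> A}) = (y \<notin> {a. h a \<in> A})"
      using A img unfolding EH_def by auto
  qed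
  have eH: "even (card VH)" using ev unfolding VH_def by simp
  have wH: "\<forall>v\<in>VH. wH v \<in> {0, 1}" using wt img unfolding wH_def by auto
  have gH: "guarantees EH wH VH (sum wH VH / 2)"
    using bip[OF sg cH bH eH wH] unfolding alice_wins_def .
  have "guarantees E w (h ` VH) (sum wH VH / 2)"
    using guar_iso[of h VH EH E wH w, OF inj edH _ gH] by (auto simp: wH_def)
  moreover have "sum wH VH = sum w S"
    using sum.reindex[OF inj, of w] img unfolding wH_def by simp
  ultimately show ?thesis using img by simp
qed

lemma nonleaf_legal:
  assumes sym: "\<And>x y. E x y \<Longrightarrow> E y x" and irr: "\<And>x. \<not> E x x"
    and lv: "legal_move E S v" and nl: "\<forall>p. \<exists>z\<in>S. E v z \<and> z \<noteq> p"
    and lu: "legal_move E (S - {v}) u"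
  shows "legal_move E S u"
proof -
  have u: "u \<in> S" "u \<noteq> v" using lu unfolding legal_move_def by auto
  obtain z where z: "z \<in> S" "E v z" "z \<noteq> u" using nl by blast
  have zv: "z \<noteq> v" using z irr by auto
  have "S - {v} - {u} \<noteq> {}" using z zv by auto
  then have cc: "connected_on E (S - {v} - {u})" using lu unfolding legal_move_def by auto
  have "connected_on E (insert v (S - {v} - {u}))"
    by (rule insert_conn[OF sym cc]) (use z zv in auto)
  moreover have "insert v (S - {v} - {u}) = S - {u}" using u lv unfolding legal_move_def by auto
  ultimately show ?thesis using u unfolding legal_move_def by auto
qed

lemma mod2r: "(a::nat) < 2 * r \<Longrightarrow> a mod r = (if a < r then a else a - r)"
  by (simp add: le_mod_geq)



lemma good_move:
  fixes S V :: "'a set" and E :: "'a \<Rightarrow> 'a \<Rightarrow> bool" and w :: "'a \<Rightarrow> real" and X :: "nat \<Rightarrow> 'a"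
  assumes sym: "\<And>x y. E x y \<Longrightarrow> E y x" and irr: "\<And>x. \<not> E x x"
    and c: "connected_on E S" and SV: "S \<subseteq> V"
    and free: "\<not> has_induced_odd_cycle_corona V E" and wt: "\<forall>v\<in>S. w v \<in> {0, 1}"
    and ro: "odd r" and r3: "3 \<le> r" and injX: "inj_on X {..<r}" and XS: "X ` {..<r} \<subseteq> S"
    and edge: "\<forall>i<r. \<forall>j<r. E (X i) (X j) \<longleftrightarrow> (j = (i + 1) mod r \<or> i = (j + 1) mod r)"
  shows "\<exists>v. legal_move E S v \<and> (\<forall>u. legal_move E (S - {v}) u \<longrightarrow> w u \<le> w v)"
proof (cases "\<exists>v. legal_move E S v \<and> w v = 1")
  case True
  then obtain v where v: "legal_move E S v" "w v = 1" by blast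
  have "w u \<le> w v" if "legal_move E (S - {v}) u" for u
    using that wt v unfolding legal_move_def by auto
  then show ?thesis using v by blast
next
  case F1: False
  show ?thesis
  proof (cases "\<exists>v. legal_move E S v \<and> (\<forall>p. \<exists>z\<in>S. E v z \<and> z \<noteq> p)")
    case True
    then obtain v where v: "legal_move E S v" "\<forall>p. \<exists>z\<in>S. E v z \<and> z \<noteq> p" by blast
    have "w u \<le> w v" if lu: "legal_move E (S - {v}) u" for u
    proof -
      have "legal_move E S u" by (rule nonleaf_legal[OF sym irr v lu])
      then have "w u = 0" using F1 wt unfolding legal_move_def by auto
      moreover have "w v = 0" using F1 wt v unfolding legal_move_def by auto
      ultimately show ?thesis by simp
    qed
    then show ?thesis using v by blast
  next
    case F2: False
    have leaf: "\<exists>p. \<forall>z\<in>S. E v z \<longrightarrow> z = p" if "legal_move E S v" for v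
      using F2 that by blast
    define nx where "nx i = (i + 1) mod r" for i
    define pv where "pv i = (if i = 0 then r - 1 else i - 1)" for i
    have nxe: "nx i = (if i + 1 = r then 0 else i + 1)" if "i < r" for i
      using that unfolding nx_def by auto
    have nxr: "nx i < r" if "i < r" for i using nxe[OF that] that r3 by auto
    have pvr: "pv i < r" if "i < r" for i using that r3 unfolding pv_def by auto
    have Xin: "X i \<in> S" if "i < r" for i using XS that by auto
    have e_nx: "E (X i) (X (nx i))" if "i < r" for i
      using edge nxr[OF that] that unfolding nx_def by auto
    have e_pv: "E (X i) (X (pv i))" if "i < r" for i
    proof -
      have "i = (pv i + 1) mod r" using that r3 unfolding pv_def by auto
      then show ?thesis using edge pvr[OF that] that by auto
    qed
    have nx_pv: "nx i \<noteq> pv i" if "i < r" for i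
      using nxe[OF that] that r3 unfolding pv_def by auto
    have nx_i: "nx i \<noteq> i" if "i < r" for i
      using nxe[OF that] that r3 by auto
    have Xinj: "X a \<noteq> X b" if "a < r" "b < r" "a \<noteq> b" for a b
      using injX that unfolding inj_on_def by auto
    have cut: "\<not> connected_on E (S - {X i})" if i: "i < r" for i
    proof
      assume cc: "connected_on E (S - {X i})"
      then have "legal_move E S (X i)" using Xin[OF i] unfolding legal_move_def by auto
      then obtain p where p: "\<forall>z\<in>S. E (X i) z \<longrightarrow> z = p" using leaf by blast
      have "X (nx i) = p" using p e_nx[OF i] Xin[OF nxr[OF i]] by auto
      moreover have "X (pv i) = p" using p e_pv[OF i] Xin[OF pvr[OF i]] by auto
      ultimately show False using Xinj[OF nxr[OF i] pvr[OF i] nx_pv[OF i]] by simp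
    qed
    define C where "C i = X (nx i)" for i
    have CS: "C i \<in> S - {X i}" if i: "i < r" for i
      using Xin[OF nxr[OF i]] Xinj[OF nxr[OF i] i nx_i[OF i]] unfolding C_def by auto
    define Q where "Q i y \<longleftrightarrow> y \<in> S - {X i} \<and> E (X i) y \<and> \<not> (ed E (S - {X i}))\<^sup>*\<^sup>* (C i) y" for i y
    have exy: "\<exists>y. Q i y" if i: "i < r" for i
      unfolding Q_def by (rule cut_neighbor[OF c sym Xin[OF i] CS[OF i] cut[OF i]])
    define Y where "Y i = (SOME y. Q i y)" for i
    have Yp: "Q i (Y i)" if "i < r" for i unfolding Y_def using exy[OF that] by (rule someI_ex)
    have ne: "(i + t) mod r \<noteq> i" if "i < r" "1 \<le> t" "t < r" for i t
    proof -
      have "i + t < 2 * r" using that by simp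
      then show ?thesis using mod2r[of "i + t" r] that by auto
    qed
    have reach: "(ed E (S - {X i}))\<^sup>*\<^sup>* (C i) (X j)" if i: "i < r" and j: "j < r" "j \<noteq> i" for i j
    proof -
      have step: "1 \<le> t \<longrightarrow> t < r \<longrightarrow> (ed E (S - {X i}))\<^sup>*\<^sup>* (C i) (X ((i + t) mod r))" for t
      proof (induction t)
        case 0 then show ?case by simp
      next
        case (Suc t)
        show ?case
        proof (intro impI)
          assume t: "1 \<le> Suc t" "Suc t < r"
          show "(ed E (S - {X i}))\<^sup>*\<^sup>* (C i) (X ((i + Suc t) mod r))"
          proof (cases "t = 0")
            case True then show ?thesis unfolding C_def nx_def by simp
          next
            case False
            define a where "a = (i + t) mod r"
            have ar: "a < r" unfolding a_def using r3 by simp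
            have b: "(i + Suc t) mod r = (a + 1) mod r" unfolding a_def by (simp add: mod_Suc_eq)
            have ih: "(ed E (S - {X i}))\<^sup>*\<^sup>* (C i) (X a)" using Suc False t unfolding a_def by simp
            have br: "(a + 1) mod r < r" using r3 by simp
            have e: "E (X a) (X ((a + 1) mod r))" using edge ar br by auto
            have na: "a \<noteq> i" unfolding a_def using ne[OF i, of t] False t by simp
            have nb: "(a + 1) mod r \<noteq> i" using ne[OF i, of "Suc t"] t b by simp
            have "ed E (S - {X i}) (X a) (X ((a + 1) mod r))"
              using e Xin[OF ar] Xin[OF br] Xinj[OF ar i na] Xinj[OF br i nb] by auto
            then show ?thesis using ih b by (simp add: rtranclp.rtrancl_into_rtrancl)
          qed
        qed
      qed
      define t where "t = (if i < j then j - i else j + r - i)"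
      have t: "1 \<le> t" "t < r" using i j unfolding t_def by auto
      have "(i + t) mod r = j"
      proof -
        have "i + t < 2 * r" using t i by simp
        then show ?thesis using mod2r[of "i + t" r] i j unfolding t_def by auto
      qed
      then show ?thesis using step[of t] t by simp
    qed
    have Ynot: "Y i \<noteq> X j" if "i < r" "j < r" for i j
    proof (cases "j = i")
      case True then show ?thesis using Yp[OF that(1)] unfolding Q_def by auto
    next
      case False then show ?thesis using Yp[OF that(1)] reach[OF that(1) that(2) False] unfolding Q_def by auto
    qed
    have YS: "Y i \<in> S" if "i < r" for i using Yp[OF that] unfolding Q_def by auto
    have key: "(ed E (S - {X j}))\<^sup>*\<^sup>* (C j) (Y i)" if "i < r" "j < r" "i \<noteq> j" for i j
    proof -
      have "(ed E (S - {X j}))\<^sup>*\<^sup>* (C j) (X i)" using reach[OF that(2) that(1)] that by auto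
      moreover have "ed E (S - {X j}) (X i) (Y i)"
        using Yp[OF that(1)] Xin[OF that(1)] Xinj[OF that(1) that(2) that(3)] Ynot[OF that(1) that(2)] YS[OF that(1)]
        unfolding Q_def by auto
      ultimately show ?thesis by (rule rtranclp.rtrancl_into_rtrancl)
    qed
    have injY: "inj_on Y {..<r}" unfolding inj_on_def
    proof (intro ballI impI)
      fix i j assume ij: "i \<in> {..<r}" "j \<in> {..<r}" "Y i = Y j"
      show "i = j"
      proof (rule ccontr)
        assume "i \<noteq> j"
        then have "(ed E (S - {X j}))\<^sup>*\<^sup>* (C j) (Y j)" using key[of i j] ij by auto
        then show False using Yp[of j] ij unfolding Q_def by auto
      qed
    qed
    have disj: "X ` {..<r} \<inter> Y ` {..<r} = {}" using Ynot by force
    have xy: "E (X i) (Y j) \<longleftrightarrow> i = j" if ij: "i < r" "j < r" for i j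
    proof
      assume e: "E (X i) (Y j)"
      show "i = j"
      proof (rule ccontr)
        assume nij: "i \<noteq> j"
        have "(ed E (S - {X j}))\<^sup>*\<^sup>* (C j) (X i)" using reach[OF ij(2) ij(1)] nij by auto
        moreover have "ed E (S - {X j}) (X i) (Y j)"
          using e Xin[OF ij(1)] Xinj[OF ij(1) ij(2) nij] Yp[OF ij(2)] unfolding Q_def by auto
        ultimately have "(ed E (S - {X j}))\<^sup>*\<^sup>* (C j) (Y j)" by (rule rtranclp.rtrancl_into_rtrancl)
        then show False using Yp[OF ij(2)] unfolding Q_def by auto
      qed
    next
      assume "i = j" then show "E (X i) (Y j)" using Yp[OF ij(2)] unfolding Q_def by auto
    qed
    have yy: "\<not> E (Y i) (Y j)" if ij: "i < r" "j < r" for i j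
    proof
      assume e: "E (Y i) (Y j)"
      have nij: "i \<noteq> j" using e irr by auto
      have "(ed E (S - {X j}))\<^sup>*\<^sup>* (C j) (Y i)" using key[OF ij nij] .
      moreover have "ed E (S - {X j}) (Y i) (Y j)"
        using e YS[OF ij(1)] Ynot[OF ij(1) ij(2)] Yp[OF ij(2)] unfolding Q_def by auto
      ultimately have "(ed E (S - {X j}))\<^sup>*\<^sup>* (C j) (Y j)" by (rule rtranclp.rtrancl_into_rtrancl)
      then show False using Yp[OF ij(2)] unfolding Q_def by auto
    qed
    have a1: "\<forall>i<r. \<forall>j<r. E (X i) (Y j) = (i = j)" using xy by blast
    have a2: "\<forall>i<r. \<forall>j<r. E (Y i) (X j) = (i = j)" using xy sym by blast
    have a3: "\<forall>i<r. \<forall>j<r. \<not> E (Y i) (Y j)" using yy by blast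
    have a4: "X ` {..<r} \<subseteq> V" using XS SV by auto
    have a5: "Y ` {..<r} \<subseteq> V" using YS SV by auto
    have "has_induced_odd_cycle_corona V E"
      unfolding has_induced_odd_cycle_corona_def
      using ro r3 injX injY disj a4 a5 edge a1 a2 a3 by blast
    then show ?thesis using free by simp
  qed
qed



lemma main_ind:
  fixes V :: "'a set" and E :: "'a \<Rightarrow> 'a \<Rightarrow> bool" and w :: "'a \<Rightarrow> real"
  assumes bip: "\<And>(VH :: nat set) EH (wH :: nat \<Rightarrow> real).
      \<lbrakk> simple_graph VH EH; connected_on EH VH; bipartite VH EH; even (card VH);
        \<forall>v\<in>VH. wH v \<in> {0, 1} \<rbrakk> \<Longrightarrow> alice_wins VH EH wH"
  and G: "simple_graph V E"
  and free: "\<not> has_induced_odd_cycle_corona V E"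
  and wt: "\<forall>v\<in>V. w v \<in> {0, 1}"
  shows "\<forall>S. card S = n \<longrightarrow> S \<subseteq> V \<longrightarrow> connected_on E S \<longrightarrow> even (card S) \<longrightarrow>
           guarantees E w S (sum w S / 2)"
proof (induction n rule: less_induct)
  case (less n)
  have sym: "\<And>x y. E x y \<Longrightarrow> E y x" and irr: "\<And>x. \<not> E x x" and finV: "finite V"
    using G unfolding simple_graph_def by auto
  show ?case
  proof (intro allI impI)
    fix S assume n: "card S = n" and SV: "S \<subseteq> V" and c: "connected_on E S" and ev: "even (card S)"
    have fin: "finite S" using finV SV using finite_subset by blast
    have wS: "\<forall>v\<in>S. w v \<in> {0, 1}" using wt SV by auto
    have dich: "(\<exists>n f a. odd n \<and> wlk E S n f a a) \<or> (\<exists>A. \<forall>x\<in>S. \<forall>y\<in>S. E x y \<longrightarrow> (x \<in> A \<longleftrightarrow> y \<notin> A))"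
      by (rule odd_or_bip[where E=E and S=S]) (erule sym, rule c)
    from dich show "guarantees E w S (sum w S / 2)"
    proof
      assume "\<exists>A. \<forall>x\<in>S. \<forall>y\<in>S. E x y \<longrightarrow> (x \<in> A \<longleftrightarrow> y \<notin> A)"
      then obtain A where A: "\<forall>x\<in>S. \<forall>y\<in>S. E x y \<longrightarrow> (x \<in> A \<longleftrightarrow> y \<notin> A)" ..
      show ?thesis by (rule bip_case[where E=E and S=S and w=w and A=A]) (rule bip, assumption+, erule sym, rule irr, rule fin, rule c, rule ev, rule A, rule wS)
    next
      assume "\<exists>n f a. odd n \<and> wlk E S n f a a"
      then obtain m f a where "odd m" "wlk E S m f a a" by blast
      obtain r X where cyc0: "odd r \<and> 3 \<le> (r::nat) \<and> inj_on X {..<r} \<and> X ` {..<r} \<subseteq> S \<and>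
          (\<forall>i<r. \<forall>j<r. E (X i) (X j) \<longleftrightarrow> (j = (i + 1) mod r \<or> i = (j + 1) mod r))"
      proof -
        have "\<exists>(r::nat) X. odd r \<and> 3 \<le> r \<and> inj_on X {..<r} \<and> X ` {..<r} \<subseteq> S \<and>
          (\<forall>i<r. \<forall>j<r. E (X i) (X j) \<longleftrightarrow> (j = (i + 1) mod r \<or> i = (j + 1) mod r))"
          by (rule min_odd[where E=E and S=S and n=m and f=f and a=a]) (erule sym, rule irr, fact+)
        then show ?thesis by (elim exE) (rule that)
      qed
      note cyc = cyc0[THEN conjunct1] cyc0[THEN conjunct2, THEN conjunct1]
        cyc0[THEN conjunct2, THEN conjunct2, THEN conjunct1]
        cyc0[THEN conjunct2, THEN conjunct2, THEN conjunct2, THEN conjunct1]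
        cyc0[THEN conjunct2, THEN conjunct2, THEN conjunct2, THEN conjunct2]
      have "\<exists>v. legal_move E S v \<and> (\<forall>u. legal_move E (S - {v}) u \<longrightarrow> w u \<le> w v)"
        by (rule good_move[where E=E and S=S and V=V and w=w and r=r and X=X])
          (erule sym, rule irr, (fact c SV free wS cyc)+)
      then obtain v where v: "legal_move E S v" "\<And>u. legal_move E (S - {v}) u \<Longrightarrow> w u \<le> w v"
        by blast
      have vS: "v \<in> S" using v(1) unfolding legal_move_def by auto
      show ?thesis
      proof (rule guarantees.move[OF v(1)])
        assume "S - {v} = {}"
        then have "S = {v}" using vS by auto
        then show "sum w S / 2 \<le> w v" using ev by simp
      next
        fix u assume ne: "S - {v} \<noteq> {}" and lu: "legal_move E (S - {v}) u"
        have uS: "u \<in> S - {v}" using lu unfolding legal_move_def by auto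
        have wuv: "w u \<le> w v" using v(2)[OF lu] .
        define T where "T = S - {v} - {u}"
        have sumS: "sum w S = w v + w u + sum w T"
        proof -
          have "sum w S = w v + sum w (S - {v})" using sum.remove[OF fin vS] .
          moreover have "sum w (S - {v}) = w u + sum w T"
            unfolding T_def using sum.remove[of "S - {v}" u w] fin uS by auto
          ultimately show ?thesis by simp
        qed
        show "guarantees E w (S - {v} - {u}) (sum w S / 2 - w v)"
        proof (cases "T = {}")
          case True
          have le: "sum w S / 2 - w v \<le> 0" using sumS wuv True by simp
          have e: "S - {v} - {u} = {}" using True unfolding T_def .
          show ?thesis unfolding e by (rule guarantees.empty[OF le])
        next
          case False
          have cT: "connected_on E T" using lu False unfolding T_def legal_move_def by auto
          have cardT: "card T = n - 2" using n fin vS uS unfolding T_def by (simp add: card_Diff_singleton)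
          have cpos: "card S \<ge> 2"
          proof -
            have "{v, u} \<subseteq> S" using vS uS by auto
            then have "card {v, u} \<le> card S" by (rule card_mono[OF fin])
            then show ?thesis using uS by auto
          qed
          have lt: "n - 2 < n" using cpos n by auto
          have evT: "even (card T)" using cardT ev n cpos by auto
          have gT: "guarantees E w T (sum w T / 2)"
            using less[OF lt] cardT SV cT evT unfolding T_def by auto
          have kle: "sum w S / 2 - w v \<le> sum w T / 2" using sumS wuv by linarith
          show ?thesis unfolding T_def[symmetric] by (rule guar_mono[OF gT kle])
        qed
      qed
    qed
  qed
qed

theorem mainTheorem1:
  fixes V :: "'a set" and E :: "'a \<Rightarrow> 'a \<Rightarrow> bool" and w :: "'a \<Rightarrow> real"
  assumes bip: "\<And>(VH :: nat set) EH (wH :: nat \<Rightarrow> real).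
      \<lbrakk> simple_graph VH EH; connected_on EH VH; bipartite VH EH; even (card VH);
        \<forall>v\<in>VH. wH v \<in> {0, 1} \<rbrakk> \<Longrightarrow> alice_wins VH EH wH"
  and G: "simple_graph V E" and conn: "connected_on E V" and ev: "even (card V)"
  and free: "\<not> has_induced_odd_cycle_corona V E"
  and wt: "\<forall>v\<in>V. w v \<in> {0, 1}"
  shows "alice_wins V E w"
  unfolding alice_wins_def
  using main_ind[OF bip G free wt, of "card V"] conn ev by blast


end
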